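(* Let $G=\{g_1,g_2,\dots\}$ be a countable amenable group and let $(F_n)_{n\in\mathbb{N}}$ be a F\o lner sequence of finite nonempty subsets of $G$ such that for every $\alpha\in[0,1)$ the series $\sum_{n=1}^\infty \alpha^{|F_n|}$ converges. Let $G$ act by measure-preserving transformations on a probability space $(X,\mu)$. Let $f\in L^\infty(\mu)$ be such that for every $\varepsilon>0$ there exists a finite set $K\subset G$ such that $f$ is $\varepsilon$-independent from the $\sigma$-algebra $\sigma(\{f\circ g: g\in G\setminus K\})$. Then \[ \lim_{n\to\infty} \frac1{|F_n|} \sum_{g\in F_n} f(gx) = \int f \, d\mu \qquad \text{for } \mu\text{-almost every } x\in X. \]
   Context: For $g\in G$ and $x\in X$, $gx$ denotes the image of $x$ under the measure-preserving transformation associated to $g$, and $f\circ g$ denotes the function $x\mapsto f(gx)$. For a family $\mathcal{F}\subset L^1(\mu)$, $\sigma(\mathcal{F})$ denotes the smallest sub-$\sigma$-algebra with respect to which every $f\in\mathcal{F}$ is measurable. A function $f$ is said to be $\varepsilon$-independent from a sub-$\sigma$-algebra $\Sigma_0$ if for every $B\in\Sigma_0$ with $\mu(B)>0$ one has $\left|\int_B f\, d\mu_B - \int f\, d\mu\right|<\varepsilon$, where $\mu_B(A)=\mu(A\cap B)/\mu(B)$ is the conditional measure on $B$. A F\o lner sequence is a sequence of finite nonempty sets $F_n\subset G$ with $|F_n g\,\triangle\, F_n|/|F_n|\to 0$ for every $g\in G$. *)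

theory Defs
  imports "HOL-Probability.Probability"
begin

text \<open>Measure-preserving left action of a group (written additively, type class group_add)
  on a probability space: T g x is gx.\<close>
definition mp_action :: "'x measure \<Rightarrow> ('g::group_add \<Rightarrow> 'x \<Rightarrow> 'x) \<Rightarrow> bool" where
  "mp_action M T \<longleftrightarrow>
     (\<forall>g. T g \<in> M \<rightarrow>\<^sub>M M \<and> distr M M (T g) = M) \<and>
     (\<forall>x\<in>space M. T 0 x = x) \<and>
     (\<forall>g h. \<forall>x\<in>space M. T (g + h) x = T g (T h x))"

definition folner :: "(nat \<Rightarrow> 'g::group_add set) \<Rightarrow> bool" where
  "folner F \<longleftrightarrow>
     (\<forall>n. finite (F n) \<and> F n \<noteq> {}) \<and>
     (\<forall>g. (\<lambda>n. real (card (((\<lambda>h. h + g) ` F n - F n) \<union> (F n - (\<lambda>h. h + g) ` F n)))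
                 / real (card (F n))) \<longlonglongrightarrow> 0)"

definition gen_sigma :: "'x measure \<Rightarrow> ('x \<Rightarrow> real) set \<Rightarrow> 'x set set" where
  "gen_sigma M \<F> = sigma_sets (space M) {h -` B \<inter> space M | h B. h \<in> \<F> \<and> B \<in> sets borel}"

definition eps_independent :: "'x measure \<Rightarrow> ('x \<Rightarrow> real) \<Rightarrow> 'x set set \<Rightarrow> real \<Rightarrow> bool" where
  "eps_independent M f \<Sigma>0 \<epsilon> \<longleftrightarrow>
     (\<forall>B\<in>\<Sigma>0. measure M B > 0 \<longrightarrow>
        \<bar>(\<integral>x. indicator B x * f x \<partial>M) / measure M B - (\<integral>x. f x \<partial>M)\<bar> < \<epsilon>)"

end

theory Submission
  imports Defs
begin

lemma exp_le_quad:
  fixes y :: real assumes "\<bar>y\<bar> \<le> 1" shows "exp y \<le> 1 + y + y\<^sup>2"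
proof (cases "y \<ge> 0")
  case True then show ?thesis using exp_bound[of y] assms by auto
next
  case False
  have "exp (-y) \<ge> 1 - y" using exp_ge_add_one_self[of "-y"] by simp
  hence "exp y \<le> 1 / (1 - y)" using False by (simp add: exp_minus field_simps)
  also have "\<dots> \<le> 1 + y + y\<^sup>2"
  proof -
    have e: "(1 - y) * (1 + y + y\<^sup>2) = 1 - y * y\<^sup>2" by (simp add: algebra_simps power2_eq_square)
    have "y * y\<^sup>2 \<le> 0" using False by (intro mult_nonpos_nonneg) auto
    hence "1 \<le> (1 - y) * (1 + y + y\<^sup>2)" unfolding e by linarith
    thus ?thesis using False by (simp add: field_simps)
  qed
  finally show ?thesis .
qed

lemma cond_mult_le:
  fixes Y Z :: "_ \<Rightarrow> real"
  assumes P: "prob_space M" and sub: "subalgebra M N"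
    and Ym[measurable]: "Y \<in> borel_measurable M" and Ybd: "\<And>x. x \<in> space M \<Longrightarrow> \<bar>Y x\<bar> \<le> c"
    and cond: "\<And>B. B \<in> sets N \<Longrightarrow> (\<integral>x. indicator B x * Y x \<partial>M) \<le> \<epsilon> * measure M B"
    and ZN[measurable]: "Z \<in> borel_measurable N" 
    and Zpos: "\<And>x. x\<in>space M \<Longrightarrow> 0 \<le> Z x"
    and Zbd: "\<And>x. x \<in> space M \<Longrightarrow> Z x \<le> d"
  shows "(\<integral>x. Z x * Y x \<partial>M) \<le> \<epsilon> * (\<integral>x. Z x \<partial>M)"
proof -
  interpret prob_space M by fact
  interpret finite_measure_subalgebra M N by unfold_locales (fact sub)
  have spN: "space N = space M" using sub by (simp add: subalgebra_def)
  have ZM[measurable]: "Z \<in> borel_measurable M" by (rule measurable_from_subalg[OF sub ZN])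
  have Yint: "integrable M Y" by (rule integrable_const_bound[where B=c]) (auto simp: Ybd)
  define g where "g = real_cond_exp M N Y"
  have gN[measurable]: "g \<in> borel_measurable N" unfolding g_def by simp
  have gM[measurable]: "g \<in> borel_measurable M" by (rule measurable_from_subalg[OF sub gN])
  define B where "B = {x \<in> space N. \<epsilon> < g x}"
  have BN: "B \<in> sets N" unfolding B_def using gN borel_measurable_iff_greater by blast
  have BM[measurable]: "B \<in> sets M" using BN sub by (auto simp: subalgebra_def)
  have iBY: "integrable M (\<lambda>x. indicator B x * Y x)"
    using integrable_mult_indicator[OF BM Yint] by simp
  have i1: "(\<integral>x. indicator B x * g x \<partial>M) = (\<integral>x. indicator B x * Y x \<partial>M)"
    unfolding g_def by (rule real_cond_exp_intg(2)[OF iBY]) (auto intro: borel_measurable_indicator[OF BN])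
  have i1int: "integrable M (\<lambda>x. indicator B x * g x)"
    unfolding g_def by (rule real_cond_exp_intg(1)[OF iBY]) (auto intro: borel_measurable_indicator[OF BN])
  have "(\<integral>x. indicator B x * (g x - \<epsilon>) \<partial>M) = (\<integral>x. indicator B x * g x \<partial>M) - \<epsilon> * measure M B"
  proof -
    have "(\<integral>x. indicator B x * (g x - \<epsilon>) \<partial>M) = (\<integral>x. indicator B x * g x - \<epsilon> * indicator B x \<partial>M)"
      by (simp add: algebra_simps)
    also have "\<dots> = (\<integral>x. indicator B x * g x \<partial>M) - (\<integral>x. \<epsilon> * indicator B x \<partial>M)"
      by (rule Bochner_Integration.integral_diff[OF i1int]) (auto simp: BM emeasure_eq_measure)
    also have "(\<integral>x. \<epsilon> * indicator B x \<partial>M) = \<epsilon> * measure M B" using BM by simp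
    finally show ?thesis .
  qed
  also have "\<dots> \<le> 0" using i1 cond[OF BN] by simp
  finally have le0: "(\<integral>x. indicator B x * (g x - \<epsilon>) \<partial>M) \<le> 0" .
  have nn: "AE x in M. 0 \<le> indicator B x * (g x - \<epsilon>)"
    by (rule AE_I2) (auto simp: indicator_def B_def)
  have intd: "integrable M (\<lambda>x. indicator B x * (g x - \<epsilon>))"
  proof -
    have "integrable M (\<lambda>x. indicator B x * g x - \<epsilon> * indicator B x)"
      by (rule Bochner_Integration.integrable_diff[OF i1int]) (auto simp: BM emeasure_eq_measure)
    thus ?thesis by (simp add: algebra_simps)
  qed
  have "(\<integral>x. indicator B x * (g x - \<epsilon>) \<partial>M) = 0"
    using le0 integral_nonneg_AE[OF nn] by linarith
  hence "AE x in M. indicator B x * (g x - \<epsilon>) = 0"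
    using integral_nonneg_eq_0_iff_AE[OF intd nn] by simp
  hence gle: "AE x in M. g x \<le> \<epsilon>"
    using AE_space by eventually_elim (auto simp: indicator_def B_def spN split: if_splits)
  have iZY: "integrable M (\<lambda>x. Z x * Y x)"
  proof (rule integrable_const_bound[where B="d*c"])
    show "AE x in M. norm (Z x * Y x) \<le> d * c"
    proof (rule AE_I2)
      fix x assume x: "x \<in> space M"
      have "Z x * \<bar>Y x\<bar> \<le> d * c"
        using Zpos[OF x] Zbd[OF x] Ybd[OF x] by (intro mult_mono) auto
      thus "norm (Z x * Y x) \<le> d * c" using Zpos[OF x] by (simp add: abs_mult)
    qed
  qed simp
  have "(\<integral>x. Z x * Y x \<partial>M) = (\<integral>x. Z x * g x \<partial>M)"
    unfolding g_def by (rule real_cond_exp_intg(2)[OF iZY, symmetric]) auto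
  also have "\<dots> \<le> (\<integral>x. Z x * \<epsilon> \<partial>M)"
  proof (rule integral_mono_AE)
    show "integrable M (\<lambda>x. Z x * g x)" unfolding g_def by (rule real_cond_exp_intg(1)[OF iZY]) auto
    show "integrable M (\<lambda>x. Z x * \<epsilon>)"
      by (rule integrable_mult_left) (rule integrable_const_bound[where B="d"], auto simp: Zpos Zbd intro!: AE_I2)
    show "AE x in M. Z x * g x \<le> Z x * \<epsilon>" using gle AE_space
      by eventually_elim (auto intro!: mult_left_mono Zpos)
  qed
  also have "\<dots> = \<epsilon> * (\<integral>x. Z x \<partial>M)" by (simp add: mult.commute)
  finally show ?thesis .
qed
lemma integrable_bdd:
  fixes f :: "_ \<Rightarrow> real"
  assumes "finite_measure M" "f \<in> borel_measurable M" "\<And>x. x \<in> space M \<Longrightarrow> \<bar>f x\<bar> \<le> B"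
  shows "integrable M f"
proof -
  interpret finite_measure M by fact
  show ?thesis by (rule integrable_const_bound[where B=B]) (auto intro!: AE_I2 assms)
qed

lemma mgf_bound:
  fixes Y :: "'i \<Rightarrow> 'a \<Rightarrow> real"
  assumes P: "prob_space M" and S: "finite S"
    and Ym: "\<And>i. i \<in> S \<Longrightarrow> Y i \<in> borel_measurable M"
    and Ybd: "\<And>i x. i \<in> S \<Longrightarrow> x \<in> space M \<Longrightarrow> \<bar>Y i x\<bar> \<le> c"
    and sub: "\<And>i. i \<in> S \<Longrightarrow> subalgebra M (N i)"
    and YN: "\<And>i j. i \<in> S \<Longrightarrow> j \<in> S \<Longrightarrow> j \<noteq> i \<Longrightarrow> Y j \<in> borel_measurable (N i)"
    and cond: "\<And>i B. i \<in> S \<Longrightarrow> B \<in> sets (N i) \<Longrightarrow> (\<integral>x. indicator B x * Y i x \<partial>M) \<le> \<epsilon> * measure M B"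
    and t: "0 \<le> t" "t * c \<le> 1"
  shows "(\<integral>x. exp (t * (\<Sum>i\<in>S. Y i x)) \<partial>M) \<le> exp (real (card S) * (t*\<epsilon> + t^2*c^2))"
proof -
  interpret prob_space M by fact
  define q where "q = t*\<epsilon> + t^2*c^2"
  have main: "(\<integral>x. exp (t * (\<Sum>i\<in>P. Y i x)) \<partial>M) \<le> exp (real (card P) * q)" if "P \<subseteq> S" for P
    using finite_subset[OF that S] that
  proof (induction P rule: finite_induct)
    case empty
    then show ?case by (simp add: prob_space)
  next
    case (insert a P)
    have aS: "a \<in> S" and PS: "P \<subseteq> S" using insert by auto
    have IH: "(\<integral>x. exp (t * (\<Sum>i\<in>P. Y i x)) \<partial>M) \<le> exp (real (card P) * q)"
      using insert PS by simp
    define Z where "Z = (\<lambda>x. exp (t * (\<Sum>i\<in>P. Y i x)))"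
    have YjN: "Y j \<in> borel_measurable (N a)" if "j \<in> P" for j
      using YN[OF aS, of j] that PS insert(2) by auto
    have smN[measurable]: "(\<lambda>x. \<Sum>i\<in>P. Y i x) \<in> borel_measurable (N a)"
      by (rule borel_measurable_sum) (rule YjN)
    have ZN: "Z \<in> borel_measurable (N a)" unfolding Z_def by measurable
    have ZM[measurable]: "Z \<in> borel_measurable M" by (rule measurable_from_subalg[OF sub[OF aS] ZN])
    have YaM[measurable]: "Y a \<in> borel_measurable M" using Ym aS by auto
    have c0: "0 \<le> c" using Ybd[OF aS] not_empty by (meson abs_ge_zero ex_in_conv order.trans)
    have Zbd: "Z x \<le> exp (t * (real (card P) * c))" if x: "x \<in> space M" for x
    proof -
      have "\<bar>\<Sum>i\<in>P. Y i x\<bar> \<le> (\<Sum>i\<in>P. c)"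
        using Ybd PS x by (intro order.trans[OF sum_abs] sum_mono) auto
      hence "(\<Sum>i\<in>P. Y i x) \<le> real (card P) * c" by simp
      thus ?thesis unfolding Z_def using t by (auto intro!: mult_left_mono)
    qed
    have Zpos: "0 \<le> Z x" for x unfolding Z_def by simp
    have eq: "exp (t * (\<Sum>i\<in>insert a P. Y i x)) = Z x * exp (t * Y a x)" for x
      using insert(1,2) by (simp add: Z_def distrib_left exp_add mult.commute)
    have pt: "exp (t * Y a x) \<le> 1 + t * Y a x + t^2 * c^2" if x: "x \<in> space M" for x
    proof -
      have "\<bar>t * Y a x\<bar> \<le> t * c" using Ybd[OF aS x] t by (simp add: abs_mult mult_left_mono)
      hence "\<bar>t * Y a x\<bar> \<le> 1" using t by simp
      hence "exp (t * Y a x) \<le> 1 + t * Y a x + (t * Y a x)^2" by (rule exp_le_quad)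
      also have "(t * Y a x)^2 \<le> t^2 * c^2"
      proof -
        have "(t * Y a x)^2 = \<bar>t * Y a x\<bar>^2" by simp
        also have "\<dots> \<le> (t*c)^2" using \<open>\<bar>t * Y a x\<bar> \<le> t * c\<close> by (intro power_mono) auto
        finally show ?thesis by (simp add: power_mult_distrib)
      qed
      finally show ?thesis by simp
    qed
    define E where "E = exp (t * (real (card P) * c))"
    have iZ: "integrable M Z" by (rule integrable_bdd[where B=E]) (auto simp: E_def Zpos Zbd intro: prob_space_axioms finite_measure_axioms)
    have iZY: "integrable M (\<lambda>x. Z x * Y a x)"
    proof (rule integrable_bdd[where B="E*c"])
      fix x assume x: "x \<in> space M"
      have "Z x * \<bar>Y a x\<bar> \<le> E * c"
        using Zbd[OF x] Ybd[OF aS x] Zpos[of x] c0 unfolding E_def by (intro mult_mono) auto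
      thus "\<bar>Z x * Y a x\<bar> \<le> E * c" using Zpos[of x] by (simp add: abs_mult)
    qed (auto intro: finite_measure_axioms)
    have iZe: "integrable M (\<lambda>x. Z x * exp (t * Y a x))"
    proof (rule integrable_bdd[where B="E*exp (t*c)"])
      fix x assume x: "x \<in> space M"
      have "t * Y a x \<le> t * c" using Ybd[OF aS x] t by (intro mult_left_mono) auto
      hence "Z x * exp (t * Y a x) \<le> E * exp (t*c)"
        using Zbd[OF x] Zpos[of x] unfolding E_def by (intro mult_mono) auto
      thus "\<bar>Z x * exp (t * Y a x)\<bar> \<le> E * exp (t*c)" using Zpos[of x] by simp
    qed (auto intro: finite_measure_axioms)
    have "(\<integral>x. exp (t * (\<Sum>i\<in>insert a P. Y i x)) \<partial>M) = (\<integral>x. Z x * exp (t * Y a x) \<partial>M)"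
      by (simp add: eq)
    also have "\<dots> \<le> (\<integral>x. (1 + t^2*c^2) * Z x + t * (Z x * Y a x) \<partial>M)"
    proof (rule integral_mono)
      show "integrable M (\<lambda>x. (1 + t^2*c^2) * Z x + t * (Z x * Y a x))" using iZ iZY by auto
      fix x assume x: "x \<in> space M"
      have "Z x * exp (t * Y a x) \<le> Z x * (1 + t * Y a x + t^2 * c^2)"
        by (rule mult_left_mono[OF pt[OF x] Zpos])
      thus "Z x * exp (t * Y a x) \<le> (1 + t^2*c^2) * Z x + t * (Z x * Y a x)" by (simp add: algebra_simps)
    qed (fact iZe)
    also have "\<dots> = (1 + t^2*c^2) * (\<integral>x. Z x \<partial>M) + t * (\<integral>x. Z x * Y a x \<partial>M)"
      using iZ iZY by simp
    also have "\<dots> \<le> (1 + t^2*c^2) * (\<integral>x. Z x \<partial>M) + t * (\<epsilon> * (\<integral>x. Z x \<partial>M))"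
    proof -
      have "(\<integral>x. Z x * Y a x \<partial>M) \<le> \<epsilon> * (\<integral>x. Z x \<partial>M)"
        by (rule cond_mult_le[OF P sub[OF aS] YaM Ybd[OF aS] cond[OF aS] ZN Zpos Zbd]) auto
      thus ?thesis using t by (intro add_left_mono mult_left_mono) auto
    qed
    also have "\<dots> = (1 + q) * (\<integral>x. Z x \<partial>M)" by (simp add: q_def algebra_simps)
    also have "\<dots> \<le> exp q * (\<integral>x. Z x \<partial>M)"
      using exp_ge_add_one_self[of q] integral_nonneg_AE[of Z M] Zpos by (intro mult_right_mono) auto
    also have "\<dots> \<le> exp q * exp (real (card P) * q)"
      using IH unfolding Z_def by (intro mult_left_mono) auto
    also have "\<dots> = exp (real (card (insert a P)) * q)"
      using insert(1,2) by (simp add: exp_add[symmetric] algebra_simps)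
    finally show ?case .
  qed
  show ?thesis using main[of S] by (simp add: q_def)
qed


lemma tail_bound:
  fixes Y :: "'i \<Rightarrow> 'a \<Rightarrow> real"
  assumes P: "prob_space M" and S: "finite S"
    and Ym: "\<And>i. i \<in> S \<Longrightarrow> Y i \<in> borel_measurable M"
    and Ybd: "\<And>i x. i \<in> S \<Longrightarrow> x \<in> space M \<Longrightarrow> \<bar>Y i x\<bar> \<le> c"
    and sub: "\<And>i. i \<in> S \<Longrightarrow> subalgebra M (N i)"
    and YN: "\<And>i j. i \<in> S \<Longrightarrow> j \<in> S \<Longrightarrow> j \<noteq> i \<Longrightarrow> Y j \<in> borel_measurable (N i)"
    and cond: "\<And>i B. i \<in> S \<Longrightarrow> B \<in> sets (N i) \<Longrightarrow> (\<integral>x. indicator B x * Y i x \<partial>M) \<le> \<epsilon> * measure M B"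
    and t: "0 < t" "t * c \<le> 1"
  shows "measure M {x\<in>space M. real (card S) * \<epsilon> + lam \<le> (\<Sum>i\<in>S. Y i x)}
           \<le> exp (real (card S) * t^2 * c^2 - t * lam)"
proof -
  interpret prob_space M by fact
  define u where "u = (\<lambda>x. exp (t * (\<Sum>i\<in>S. Y i x)))"
  define a where "a = real (card S) * \<epsilon> + lam"
  have sm: "(\<lambda>x. \<Sum>i\<in>S. Y i x) \<in> borel_measurable M"
    by (rule borel_measurable_sum) (rule Ym)
  have um: "u \<in> borel_measurable M" unfolding u_def using sm by measurable
  have iu: "integrable M u"
  proof (rule integrable_bdd[where B="exp (t * (real (card S) * c))"])
    fix x assume x: "x \<in> space M"
    have "\<bar>\<Sum>i\<in>S. Y i x\<bar> \<le> (\<Sum>i\<in>S. c)"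
      using Ybd x by (intro order.trans[OF sum_abs] sum_mono) auto
    hence "(\<Sum>i\<in>S. Y i x) \<le> real (card S) * c" by simp
    thus "\<bar>u x\<bar> \<le> exp (t * (real (card S) * c))" unfolding u_def using t by (auto intro!: mult_left_mono)
  qed (auto intro: finite_measure_axioms um)
  have seteq: "{x\<in>space M. a \<le> (\<Sum>i\<in>S. Y i x)} = {x\<in>space M. exp (t * a) \<le> u x}"
    unfolding u_def using t by auto
  have "measure M {x\<in>space M. exp (t * a) \<le> u x} \<le> (\<integral>x. u x \<partial>M) / exp (t * a)"
    by (rule integral_Markov_inequality_measure[OF iu]) (auto simp: u_def)
  also have "\<dots> \<le> exp (real (card S) * (t*\<epsilon> + t^2*c^2)) / exp (t * a)"
    unfolding u_def
    by (intro divide_right_mono mgf_bound[OF P S Ym Ybd sub YN cond]) (use t in auto)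
  also have "\<dots> = exp (real (card S) * t^2 * c^2 - t * lam)"
    unfolding a_def by (simp add: exp_diff[symmetric] algebra_simps)
  finally show ?thesis using seteq unfolding a_def by simp
qed

lemma coloring:
  fixes S K :: "'g::group_add set"
  assumes "finite S" "finite K"
  shows "\<exists>col. (\<forall>g\<in>S. col g < 2 * card K + 1) \<and>
           (\<forall>g\<in>S. \<forall>h\<in>S. g \<noteq> h \<longrightarrow> col g = col h \<longrightarrow> g - h \<notin> K)"
  using assms(1)
proof (induction S rule: finite_induct)
  case empty show ?case by auto
next
  case (insert a S)
  define D where "D = 2 * card K + 1"
  obtain col where c1: "\<forall>g\<in>S. col g < 2 * card K + 1" and c2: "\<forall>g\<in>S. \<forall>h\<in>S. g \<noteq> h \<longrightarrow> col g = col h \<longrightarrow> g - h \<notin> K"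
    using insert.IH by (elim exE conjE) (rule that)
  define Nb where "Nb = {h\<in>S. a - h \<in> K \<or> h - a \<in> K}"
  have sub: "Nb \<subseteq> (\<lambda>k. -k + a) ` K \<union> (\<lambda>k. k + a) ` K"
  proof
    fix h assume "h \<in> Nb"
    hence "a - h \<in> K \<or> h - a \<in> K" unfolding Nb_def by auto
    thus "h \<in> (\<lambda>k. -k + a) ` K \<union> (\<lambda>k. k + a) ` K"
    proof
      assume "a - h \<in> K"
      moreover have "-(a - h) + a = h" by (simp add: minus_diff_eq)
      ultimately show ?thesis by (metis UnI1 image_eqI)
    next
      assume "h - a \<in> K"
      moreover have "(h - a) + a = h" by simp
      ultimately show ?thesis by (metis UnI2 image_eqI)
    qed
  qed
  have "card Nb \<le> card ((\<lambda>k. -k + a) ` K \<union> (\<lambda>k. k + a) ` K)"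
    by (rule card_mono[OF _ sub]) (use assms(2) in auto)
  also have "\<dots> \<le> card ((\<lambda>k. -k + a) ` K) + card ((\<lambda>k. k + a) ` K)" by (rule card_Un_le)
  also have "\<dots> \<le> card K + card K" by (intro add_mono card_image_le assms(2))
  finally have cN: "card Nb \<le> 2 * card K" by simp
  have fN: "finite Nb" using insert(1) unfolding Nb_def by auto
  have "card (col ` Nb) < card {..<D}" using card_image_le[OF fN, of col] cN unfolding D_def by simp
  hence "\<not> {..<D} \<subseteq> col ` Nb" using card_mono[OF finite_imageI[OF fN]] by (meson not_le)
  then obtain i where i: "i < D" "i \<notin> col ` Nb" by auto
  define col' where "col' = col(a := i)"
  show ?case unfolding D_def[symmetric]
  proof (intro exI[of _ col'] conjI ballI impI)
    fix g assume "g \<in> insert a S" thus "col' g < D" using c1 i unfolding col'_def D_def by auto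
  next
    fix g h assume g: "g \<in> insert a S" and h: "h \<in> insert a S" and ne: "g \<noteq> h" and eq: "col' g = col' h"
    show "g - h \<notin> K"
    proof (cases "g = a")
      case True
      hence hS: "h \<in> S" "h \<noteq> a" using h ne by auto
      hence "col h = i" using eq True unfolding col'_def by auto
      thus ?thesis using i hS True unfolding Nb_def by auto
    next
      case False
      hence gS: "g \<in> S" using g by auto
      show ?thesis
      proof (cases "h = a")
        case True
        hence "col g = i" using eq False unfolding col'_def by auto
        thus ?thesis using i gS True unfolding Nb_def by auto
      next
        case False
        hence "h \<in> S" using h by auto
        moreover have "col g = col h" using eq False \<open>g \<noteq> a\<close> unfolding col'_def by auto
        ultimately show ?thesis using c2 gS ne by auto
      qed
    qed
  qed
qed

lemma key:
  fixes M :: "'x measure" and T :: "'g::group_add \<Rightarrow> 'x \<Rightarrow> 'x" and F :: "nat \<Rightarrow> 'g set" and f :: "'x \<Rightarrow> real"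
  assumes P: "prob_space M"
    and Tm: "\<And>g. T g \<in> M \<rightarrow>\<^sub>M M" and Td: "\<And>g. distr M M (T g) = M"
    and Tadd: "\<And>g h x. x \<in> space M \<Longrightarrow> T (g + h) x = T g (T h x)"
    and Ffin: "\<And>n. finite (F n)"
    and summ: "\<And>\<alpha>::real. 0 \<le> \<alpha> \<Longrightarrow> \<alpha> < 1 \<Longrightarrow> summable (\<lambda>n. \<alpha> ^ card (F n))"
    and fm[measurable]: "f \<in> borel_measurable M"
    and C1: "1 \<le> C" and Cf: "AE x in M. \<bar>f x\<bar> \<le> C"
    and e0: "0 < \<epsilon>" and e1: "\<epsilon> \<le> 1"
    and Kf: "finite K" and Ki: "eps_independent M f (gen_sigma M {(\<lambda>x. f (T g x)) | g. g \<notin> K}) \<epsilon>"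
  shows "AE x in M. eventually (\<lambda>n. \<bar>\<Sum>g\<in>F n. max (-C) (min C (f (T g x))) - (\<integral>x. f x \<partial>M)\<bar>
            \<le> 2 * \<epsilon> * real (card (F n))) sequentially"
proof -
  interpret prob_space M by fact
  define \<mu>0 where "\<mu>0 = (\<integral>x. f x \<partial>M)"
  define tr where "tr = (\<lambda>v::real. max (-C) (min C v))"
  define c where "c = C + \<bar>\<mu>0\<bar>"
  define Yf where "Yf = (\<lambda>g x. tr (f (T g x)) - \<mu>0)"
  have Tsp: "T g x \<in> space M" if "x \<in> space M" for g x using Tm[of g] that by (meson measurable_space)
  have trm[measurable]: "tr \<in> borel_measurable borel" unfolding tr_def by measurable
  have trbd: "\<bar>tr v\<bar> \<le> C" for v unfolding tr_def using C1 by auto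
  have c1: "1 \<le> c" unfolding c_def using C1 by auto
  have Ybd: "\<bar>Yf g x\<bar> \<le> c" for g x unfolding Yf_def c_def using trbd[of "f (T g x)"] by auto
  have fTm[measurable]: "(\<lambda>x. f (T g x)) \<in> borel_measurable M" for g
    using measurable_compose[OF Tm fm] .
  have Ym: "Yf g \<in> borel_measurable M" for g unfolding Yf_def by measurable
  have ftr: "AE x in M. tr (f x) = f x" using Cf by eventually_elim (auto simp: tr_def)
  define G0 where "G0 = gen_sigma M {(\<lambda>x. f (T g x)) | g. g \<notin> K}"
  define Gen0 where "Gen0 = {h -` B \<inter> space M | h B. h \<in> {(\<lambda>x. f (T g x)) | g. g \<notin> K} \<and> B \<in> sets borel}"
  have G0eq: "G0 = sigma_sets (space M) Gen0" unfolding G0_def Gen0_def gen_sigma_def by simp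
  have G0M: "G0 \<subseteq> sets M" unfolding G0eq
    by (rule sets.sigma_sets_subset) (auto simp: Gen0_def)
  have fint: "integrable M f" by (rule integrable_const_bound[where B=C]) (use Cf in auto)
  have Aind: "\<bar>\<integral>x. indicator A x * (tr (f x) - \<mu>0) \<partial>M\<bar> \<le> \<epsilon> * measure M A" if A: "A \<in> G0" for A
  proof -
    have AM[measurable]: "A \<in> sets M" using A G0M by auto
    have iAf: "integrable M (\<lambda>x. indicator A x * f x)" using integrable_mult_indicator[OF AM fint] by simp
    have "(\<integral>x. indicator A x * (tr (f x) - \<mu>0) \<partial>M) = (\<integral>x. indicator A x * f x - \<mu>0 * indicator A x \<partial>M)"
      by (rule integral_cong_AE) (use ftr in \<open>auto simp: algebra_simps\<close>)
    also have "\<dots> = (\<integral>x. indicator A x * f x \<partial>M) - \<mu>0 * measure M A"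
      using iAf by (subst Bochner_Integration.integral_diff) (auto simp: emeasure_eq_measure)
    finally have eq: "(\<integral>x. indicator A x * (tr (f x) - \<mu>0) \<partial>M) = (\<integral>x. indicator A x * f x \<partial>M) - \<mu>0 * measure M A" .
    show ?thesis
    proof (cases "measure M A > 0")
      case True
      have "\<bar>(\<integral>x. indicator A x * f x \<partial>M) / measure M A - \<mu>0\<bar> < \<epsilon>"
        using Ki A True unfolding eps_independent_def G0_def \<mu>0_def by blast
      hence "\<bar>(\<integral>x. indicator A x * f x \<partial>M) / measure M A - \<mu>0\<bar> * measure M A \<le> \<epsilon> * measure M A"
        using True by (intro mult_right_mono) auto
      also have "\<bar>(\<integral>x. indicator A x * f x \<partial>M) / measure M A - \<mu>0\<bar> * measure M A
          = \<bar>(\<integral>x. indicator A x * f x \<partial>M) - \<mu>0 * measure M A\<bar>"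
        using True by (simp add: abs_mult[symmetric] field_simps)
      finally show ?thesis unfolding eq .
    next
      case False
      hence m0: "measure M A = 0" using measure_nonneg[of M A] by linarith
      hence "A \<in> null_sets M" using AM by (simp add: emeasure_eq_measure null_sets_def)
      hence "AE x in M. x \<notin> A" by (rule AE_not_in)
      hence "(\<integral>x. indicator A x * f x \<partial>M) = (\<integral>x. 0 \<partial>M)"
        by (intro integral_cong_AE) auto
      thus ?thesis unfolding eq using m0 by simp
    qed
  qed
  define Gen where "Gen = (\<lambda>i. {h -` B \<inter> space M | h B. h \<in> {(\<lambda>x. f (T g x)) | g. g - i \<notin> K} \<and> B \<in> sets borel})"
  define N where "N = (\<lambda>i. sigma (space M) (Gen i))"
  have GenP: "Gen i \<subseteq> Pow (space M)" for i unfolding Gen_def by auto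
  have GenM: "Gen i \<subseteq> sets M" for i unfolding Gen_def by auto
  have setsN: "sets (N i) = sigma_sets (space M) (Gen i)" for i
    unfolding N_def by (rule sets_measure_of[OF GenP])
  have spN: "space (N i) = space M" for i
    unfolding N_def by (rule space_measure_of[OF GenP])
  have subN: "subalgebra M (N i)" for i
    unfolding subalgebra_def using setsN spN GenM by (simp add: sets.sigma_sets_subset)
  have fTN: "(\<lambda>x. f (T j x)) \<in> borel_measurable (N i)" if "j - i \<notin> K" for i j
  proof (rule measurableI)
    fix A :: "real set" assume "A \<in> sets borel"
    hence "(\<lambda>x. f (T j x)) -` A \<inter> space M \<in> Gen i" unfolding Gen_def using that by blast
    thus "(\<lambda>x. f (T j x)) -` A \<inter> space (N i) \<in> sets (N i)" unfolding setsN spN by auto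
  qed auto
  have YN: "Yf j \<in> borel_measurable (N i)" if "j - i \<notin> K" for i j
  proof -
    note fTN[OF that, measurable]
    show ?thesis unfolding Yf_def by measurable
  qed
  have eqgen: "{T i -` A \<inter> space M | A. A \<in> Gen0} = Gen i" for i
  proof (intro equalityI subsetI)
    fix S assume "S \<in> {T i -` A \<inter> space M | A. A \<in> Gen0}"
    then obtain g Bo where g: "g \<notin> K" "Bo \<in> sets borel" and S: "S = T i -` ((\<lambda>x. f (T g x)) -` Bo \<inter> space M) \<inter> space M"
      unfolding Gen0_def by blast
    have "S = (\<lambda>x. f (T (g + i) x)) -` Bo \<inter> space M" using S Tsp Tadd by auto
    moreover have "(g + i) - i \<notin> K" using g by simp
    ultimately show "S \<in> Gen i" unfolding Gen_def using g(2) by blast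
  next
    fix S assume "S \<in> Gen i"
    then obtain g Bo where g: "g - i \<notin> K" "Bo \<in> sets borel" and S: "S = (\<lambda>x. f (T g x)) -` Bo \<inter> space M"
      unfolding Gen_def by blast
    have "T (g - i) (T i x) = T g x" if "x \<in> space M" for x using Tadd[OF that, of "g - i" i] by simp
    hence "S = T i -` ((\<lambda>x. f (T (g - i) x)) -` Bo \<inter> space M) \<inter> space M"
      using S Tsp by auto
    thus "S \<in> {T i -` A \<inter> space M | A. A \<in> Gen0}" unfolding Gen0_def using g by blast
  qed
  have transp: "\<exists>A\<in>G0. B = T i -` A \<inter> space M" if "B \<in> sets (N i)" for B i
  proof -
    have Ti: "T i \<in> space M \<rightarrow> space M" using Tsp by auto
    have "B \<in> sigma_sets (space M) {T i -` A \<inter> space M | A. A \<in> Gen0}"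
      using that unfolding setsN eqgen .
    also have "\<dots> = {T i -` A \<inter> space M | A. A \<in> sigma_sets (space M) Gen0}"
      by (rule sigma_sets_vimage_commute[OF Ti, symmetric])
    finally show ?thesis unfolding G0eq by blast
  qed
  have condA: "\<bar>\<integral>x. indicator B x * Yf i x \<partial>M\<bar> \<le> \<epsilon> * measure M B" if BN: "B \<in> sets (N i)" for B i
  proof -
    obtain A where A: "A \<in> G0" and B: "B = T i -` A \<inter> space M" using transp[OF BN] by blast
    have AM[measurable]: "A \<in> sets M" using A G0M by auto
    have "(\<integral>x. indicator B x * Yf i x \<partial>M) = (\<integral>x. (\<lambda>y. indicator A y * (tr (f y) - \<mu>0)) (T i x) \<partial>M)"
      by (rule Bochner_Integration.integral_cong) (auto simp: B Yf_def indicator_def Tsp)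
    also have "\<dots> = integral\<^sup>L (distr M M (T i)) (\<lambda>y. indicator A y * (tr (f y) - \<mu>0))"
      by (rule integral_distr[symmetric, OF Tm]) measurable
    also have "\<dots> = (\<integral>y. indicator A y * (tr (f y) - \<mu>0) \<partial>M)" unfolding Td ..
    finally have e1: "(\<integral>x. indicator B x * Yf i x \<partial>M) = (\<integral>y. indicator A y * (tr (f y) - \<mu>0) \<partial>M)" .
    have "measure M B = measure (distr M M (T i)) A" unfolding B by (rule measure_distr[OF Tm AM, symmetric])
    hence e2: "measure M B = measure M A" unfolding Td .
    show ?thesis unfolding e1 e2 by (rule Aind[OF A])
  qed
  define D where "D = 2 * card K + 1"
  define \<delta> where "\<delta> = \<epsilon> / real D"
  define t where "t = \<delta> / (2 * c^2)"
  define \<beta> where "\<beta> = \<delta>^2 / (4 * c^2)"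
  have D0: "1 \<le> real D" unfolding D_def by simp
  have d0: "0 < \<delta>" unfolding \<delta>_def using e0 D0 by simp
  have d1: "\<delta> \<le> \<epsilon>" unfolding \<delta>_def using e0 D0 by (simp add: divide_le_eq)
  have Dd: "real D * \<delta> = \<epsilon>" unfolding \<delta>_def using D0 by simp
  have t0: "0 < t" unfolding t_def using d0 c1 by simp
  have tc: "t * c \<le> 1"
  proof -
    have "t * c = \<delta> / (2 * c)" unfolding t_def using c1 by (simp add: power2_eq_square)
    also have "\<dots> \<le> 1" using d1 e1 c1 by (simp add: divide_le_eq)
    finally show ?thesis .
  qed
  have b0: "0 < \<beta>" unfolding \<beta>_def using d0 c1 by simp
  have expo: "m * t^2 * c^2 - t * (\<delta> * m) = - \<beta> * m" for m :: real
    unfolding t_def \<beta>_def using c1 by (simp add: field_simps power2_eq_square)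
  have "\<forall>n. \<exists>cl. (\<forall>g\<in>F n. cl g < D) \<and> (\<forall>g\<in>F n. \<forall>h\<in>F n. g \<noteq> h \<longrightarrow> cl g = cl h \<longrightarrow> g - h \<notin> K)"
    unfolding D_def using coloring[OF Ffin Kf] by blast
  then obtain col where col1: "\<And>n g. g \<in> F n \<Longrightarrow> col n g < D"
    and col2: "\<And>n g h. g \<in> F n \<Longrightarrow> h \<in> F n \<Longrightarrow> g \<noteq> h \<Longrightarrow> col n g = col n h \<Longrightarrow> g - h \<notin> K"
    by metis
  define Pc where "Pc = (\<lambda>n k. {g\<in>F n. col n g = k})"
  have Pcfin: "finite (Pc n k)" for n k unfolding Pc_def using Ffin by auto
  have Pcc: "card (Pc n k) \<le> card (F n)" for n k unfolding Pc_def using Ffin by (intro card_mono) auto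
  define EvP where "EvP = (\<lambda>n k. {x\<in>space M. real (card (Pc n k)) * \<epsilon> + \<delta> * real (card (F n)) \<le> (\<Sum>g\<in>Pc n k. Yf g x)})"
  define EvM where "EvM = (\<lambda>n k. {x\<in>space M. real (card (Pc n k)) * \<epsilon> + \<delta> * real (card (F n)) \<le> (\<Sum>g\<in>Pc n k. - Yf g x)})"
  define Ev where "Ev = (\<lambda>n. \<Union>k<D. EvP n k \<union> EvM n k)"
  note Ym[measurable]
  have EvPs[measurable]: "EvP n k \<in> sets M" for n k unfolding EvP_def by measurable
  have EvMs[measurable]: "EvM n k \<in> sets M" for n k unfolding EvM_def by measurable
  have Evs[measurable]: "Ev n \<in> sets M" for n unfolding Ev_def by measurable
  have YNc: "Yf j \<in> borel_measurable (N i)" if "i \<in> Pc n k" "j \<in> Pc n k" "j \<noteq> i" for i j n k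
    using that col2[of j n i] unfolding Pc_def by (intro YN) auto
  have cardb: "exp (real (card (Pc n k)) * t^2 * c^2 - t * (\<delta> * real (card (F n))))
      \<le> exp (- \<beta> * real (card (F n)))" for n k
  proof -
    have "real (card (Pc n k)) * t^2 * c^2 \<le> real (card (F n)) * t^2 * c^2"
      using Pcc[of n k] by (intro mult_right_mono) auto
    thus ?thesis using expo[of "real (card (F n))"] by simp
  qed
  have tailP: "measure M (EvP n k) \<le> exp (- \<beta> * real (card (F n)))" for n k
  proof -
    have "measure M (EvP n k) \<le> exp (real (card (Pc n k)) * t^2 * c^2 - t * (\<delta> * real (card (F n))))"
      unfolding EvP_def
    proof (rule tail_bound[where N=N, OF P Pcfin Ym Ybd subN YNc _ t0 tc])
      fix i B assume "B \<in> sets (N i)"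
      from condA[OF this] show "(\<integral>x. indicator B x * Yf i x \<partial>M) \<le> \<epsilon> * measure M B" by simp
    qed auto
    thus ?thesis using cardb[of n k] by linarith
  qed
  have tailM: "measure M (EvM n k) \<le> exp (- \<beta> * real (card (F n)))" for n k
  proof -
    have "measure M (EvM n k) \<le> exp (real (card (Pc n k)) * t^2 * c^2 - t * (\<delta> * real (card (F n))))"
      unfolding EvM_def
    proof (rule tail_bound[where N=N and Y="\<lambda>g x. - Yf g x", OF P Pcfin _ _ subN _ _ t0 tc])
      fix i B assume "B \<in> sets (N i)"
      from condA[OF this] show "(\<integral>x. indicator B x * - Yf i x \<partial>M) \<le> \<epsilon> * measure M B" by simp
    next
      fix i j assume "i \<in> Pc n k" "j \<in> Pc n k" "j \<noteq> i"
      from YNc[OF this] show "(\<lambda>x. - Yf j x) \<in> borel_measurable (N i)" by measurable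
    qed (auto simp: Ybd)
    thus ?thesis using cardb[of n k] by linarith
  qed
  have measEv: "measure M (Ev n) \<le> 2 * real D * exp (- \<beta>) ^ card (F n)" for n
  proof -
    have "measure M (Ev n) \<le> (\<Sum>k<D. measure M (EvP n k \<union> EvM n k))"
      unfolding Ev_def by (rule measure_UNION_le) auto
    also have "\<dots> \<le> (\<Sum>k<D. 2 * exp (- \<beta> * real (card (F n))))"
    proof (rule sum_mono)
      fix k
      have "measure M (EvP n k \<union> EvM n k) \<le> measure M (EvP n k) + measure M (EvM n k)"
        by (rule measure_Un_le) auto
      thus "measure M (EvP n k \<union> EvM n k) \<le> 2 * exp (- \<beta> * real (card (F n)))"
        using tailP[of n k] tailM[of n k] by linarith
    qed
    also have "\<dots> = 2 * real D * exp (- \<beta>) ^ card (F n)"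
      using exp_of_nat_mult[of "card (F n)" "- \<beta>"] by (simp add: mult.commute)
    finally show ?thesis .
  qed
  have summEv: "summable (\<lambda>n. measure M (Ev n))"
  proof (rule summable_comparison_test'[where N=0])
    show "summable (\<lambda>n. 2 * real D * exp (- \<beta>) ^ card (F n))"
      using summ[of "exp (- \<beta>)"] b0 by (intro summable_mult) auto
    fix n show "norm (measure M (Ev n)) \<le> 2 * real D * exp (- \<beta>) ^ card (F n)"
      using measEv[of n] by simp
  qed
  have BC: "AE x in M. eventually (\<lambda>n. x \<in> space M - Ev n) sequentially"
    by (rule borel_cantelli_AE1[OF Evs _ summEv]) (simp add: emeasure_eq_measure)
  show ?thesis
  proof (rule AE_mp[OF BC], rule AE_I2, intro impI)
    fix x assume x: "x \<in> space M" and ev: "eventually (\<lambda>n. x \<in> space M - Ev n) sequentially"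
    show "eventually (\<lambda>n. \<bar>\<Sum>g\<in>F n. max (-C) (min C (f (T g x))) - (\<integral>x. f x \<partial>M)\<bar>
            \<le> 2 * \<epsilon> * real (card (F n))) sequentially"
      using ev
    proof (rule eventually_mono)
      fix n assume xn: "x \<in> space M - Ev n"
      have bnd: "\<bar>\<Sum>g\<in>Pc n k. Yf g x\<bar> \<le> real (card (Pc n k)) * \<epsilon> + \<delta> * real (card (F n))" if k: "k < D" for k
      proof -
        have "x \<notin> EvP n k" "x \<notin> EvM n k" using xn k unfolding Ev_def by auto
        hence "(\<Sum>g\<in>Pc n k. Yf g x) < real (card (Pc n k)) * \<epsilon> + \<delta> * real (card (F n))"
          "(\<Sum>g\<in>Pc n k. - Yf g x) < real (card (Pc n k)) * \<epsilon> + \<delta> * real (card (F n))"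
          using x unfolding EvP_def EvM_def by auto
        thus ?thesis by (simp add: sum_negf)
      qed
      have img: "col n ` F n \<subseteq> {..<D}" using col1 by auto
      have decomp: "(\<Sum>g\<in>F n. Yf g x) = (\<Sum>k<D. \<Sum>g\<in>Pc n k. Yf g x)"
        unfolding Pc_def by (rule sum.group[OF Ffin _ img, symmetric]) simp
      have cards: "(\<Sum>k<D. real (card (Pc n k))) = real (card (F n))"
      proof -
        have "(\<Sum>k<D. \<Sum>g\<in>Pc n k. (1::real)) = (\<Sum>g\<in>F n. (1::real))"
          unfolding Pc_def by (rule sum.group[OF Ffin _ img]) simp
        thus ?thesis by simp
      qed
      have "\<bar>\<Sum>g\<in>F n. Yf g x\<bar> \<le> (\<Sum>k<D. \<bar>\<Sum>g\<in>Pc n k. Yf g x\<bar>)"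
        unfolding decomp by (rule sum_abs)
      also have "\<dots> \<le> (\<Sum>k<D. real (card (Pc n k)) * \<epsilon> + \<delta> * real (card (F n)))"
        by (rule sum_mono) (use bnd in auto)
      also have "\<dots> = \<epsilon> * (\<Sum>k<D. real (card (Pc n k))) + real D * \<delta> * real (card (F n))"
        by (simp add: sum.distrib sum_distrib_left sum_distrib_right mult.commute)
      also have "\<dots> = 2 * \<epsilon> * real (card (F n))" unfolding cards Dd by simp
      finally show "\<bar>\<Sum>g\<in>F n. max (-C) (min C (f (T g x))) - (\<integral>x. f x \<partial>M)\<bar> \<le> 2 * \<epsilon> * real (card (F n))"
        unfolding Yf_def tr_def \<mu>0_def .
    qed
  qed
qed

theorem theorem3:
  fixes M :: "'x measure" and T :: "'g::{group_add, countable} \<Rightarrow> 'x \<Rightarrow> 'x"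
    and F :: "nat \<Rightarrow> 'g set" and f :: "'x \<Rightarrow> real"
  assumes "prob_space M"
    and "mp_action M T"
    and "folner F"
    and "\<And>\<alpha>::real. 0 \<le> \<alpha> \<Longrightarrow> \<alpha> < 1 \<Longrightarrow> summable (\<lambda>n. \<alpha> ^ card (F n))"
    and "f \<in> borel_measurable M"
    and "\<exists>C. AE x in M. \<bar>f x\<bar> \<le> C"
    and "\<And>\<epsilon>. \<epsilon> > 0 \<Longrightarrow> \<exists>K. finite K \<and>
            eps_independent M f (gen_sigma M {(\<lambda>x. f (T g x)) | g. g \<notin> K}) \<epsilon>"
  shows "AE x in M. (\<lambda>n. (\<Sum>g\<in>F n. f (T g x)) / real (card (F n))) \<longlonglongrightarrow> (\<integral>x. f x \<partial>M)"
proof -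
  interpret prob_space M by fact
  have Tm: "\<And>g. T g \<in> M \<rightarrow>\<^sub>M M" and Td: "\<And>g. distr M M (T g) = M"
    and Tadd: "\<And>g h x. x \<in> space M \<Longrightarrow> T (g + h) x = T g (T h x)"
    using assms(2) unfolding mp_action_def by auto
  have Ffin: "\<And>n. finite (F n)" and Fne: "\<And>n. F n \<noteq> {}"
    using assms(3) unfolding folner_def by auto
  obtain C0 where C0: "AE x in M. \<bar>f x\<bar> \<le> C0" using assms(6) by blast
  define C where "C = max C0 1"
  have C1: "1 \<le> C" unfolding C_def by simp
  have Cf: "AE x in M. \<bar>f x\<bar> \<le> C" using C0 by eventually_elim (auto simp: C_def)
  define tr where "tr = (\<lambda>v::real. max (-C) (min C v))"
  define \<mu>0 where "\<mu>0 = (\<integral>x. f x \<partial>M)"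
  note fm[measurable] = assms(5)
  have AEg: "AE x in M. \<forall>g. tr (f (T g x)) = f (T g x)"
    unfolding AE_all_countable
  proof
    fix g
    have "AE x in distr M M (T g). \<bar>f x\<bar> \<le> C" using Cf unfolding Td .
    hence "AE x in M. \<bar>f (T g x)\<bar> \<le> C"
      by (subst (asm) AE_distr_iff[OF Tm]) measurable
    thus "AE x in M. tr (f (T g x)) = f (T g x)" by eventually_elim (auto simp: tr_def)
  qed
  have keyk: "AE x in M. \<forall>k::nat. eventually (\<lambda>n. \<bar>\<Sum>g\<in>F n. tr (f (T g x)) - \<mu>0\<bar>
      \<le> 2 * (1 / real (Suc k)) * real (card (F n))) sequentially"
    unfolding AE_all_countable
  proof
    fix k :: nat
    have ek: "0 < 1 / real (Suc k)" "1 / real (Suc k) \<le> 1" by auto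
    obtain K where K: "finite K" "eps_independent M f (gen_sigma M {(\<lambda>x. f (T g x)) | g. g \<notin> K}) (1 / real (Suc k))"
      using assms(7)[OF ek(1)] by blast
    show "AE x in M. eventually (\<lambda>n. \<bar>\<Sum>g\<in>F n. tr (f (T g x)) - \<mu>0\<bar>
      \<le> 2 * (1 / real (Suc k)) * real (card (F n))) sequentially"
      using key[OF assms(1) Tm Td Tadd Ffin assms(4) assms(5) C1 Cf ek K] unfolding tr_def \<mu>0_def .
  qed
  show ?thesis using keyk AEg
  proof eventually_elim
    case (elim x)
    show ?case unfolding tendsto_iff
    proof (intro allI impI)
      fix e :: real assume e: "0 < e"
      obtain k where k: "inverse (real (Suc k)) < e / 2" using reals_Archimedean[of "e/2"] e by auto
      show "eventually (\<lambda>n. dist ((\<Sum>g\<in>F n. f (T g x)) / real (card (F n))) (\<integral>x. f x \<partial>M) < e) sequentially"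
        using elim(1)[rule_format, of k]
      proof (rule eventually_mono)
        fix n assume h: "\<bar>\<Sum>g\<in>F n. tr (f (T g x)) - \<mu>0\<bar> \<le> 2 * (1 / real (Suc k)) * real (card (F n))"
        have m0: "0 < real (card (F n))" using Ffin[of n] Fne[of n] by (simp add: card_gt_0_iff)
        have s: "(\<Sum>g\<in>F n. tr (f (T g x)) - \<mu>0) = (\<Sum>g\<in>F n. f (T g x)) - real (card (F n)) * \<mu>0"
          using elim(2) by (simp add: sum_subtractf)
        have "dist ((\<Sum>g\<in>F n. f (T g x)) / real (card (F n))) \<mu>0
            = \<bar>\<Sum>g\<in>F n. tr (f (T g x)) - \<mu>0\<bar> / real (card (F n))"
          unfolding s dist_real_def using m0 by (simp add: field_simps)
        also have "\<dots> \<le> 2 * (1 / real (Suc k))" using h m0 by (simp add: divide_le_eq)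
        also have "\<dots> < e" using k by (simp add: inverse_eq_divide)
        finally show "dist ((\<Sum>g\<in>F n. f (T g x)) / real (card (F n))) (\<integral>x. f x \<partial>M) < e"
          unfolding \<mu>0_def .
      qed
    qed
  qed
qed

end
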